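(* Let $G$ be a group, $N$ a normal subgroup and $\mu\in\mathrm{Q}(N)^G$. Then $D(\mu)=\sup_{g\in G,\,x\in N}|\mu([g,x])|$.
   Context: $[g,x]=gxg^{-1}x^{-1}$. $\mathrm{Q}(N)^G$ is the space of homogeneous quasimorphisms $\mu\colon N\to\mathbb{R}$ (i.e. $D(\mu)=\sup_{x_1,x_2\in N}|\mu(x_1x_2)-\mu(x_1)-\mu(x_2)|<\infty$ and $\mu(x^n)=n\mu(x)$ for $n\in\mathbb{Z}$) satisfying $\mu(gxg^{-1})=\mu(x)$ for all $g\in G$, $x\in N$. *)

theory Defs
  imports "HOL-Algebra.Algebra"
begin

definition defect :: "('a, 'b) monoid_scheme \<Rightarrow> 'a set \<Rightarrow> ('a \<Rightarrow> real) \<Rightarrow> real" where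
  "defect G N \<mu> = (SUP p\<in>N \<times> N. \<bar>\<mu> (fst p \<otimes>\<^bsub>G\<^esub> snd p) - \<mu> (fst p) - \<mu> (snd p)\<bar>)"

definition homogeneous_quasimorphism :: "('a, 'b) monoid_scheme \<Rightarrow> 'a set \<Rightarrow> ('a \<Rightarrow> real) \<Rightarrow> bool" where
  "homogeneous_quasimorphism G N \<mu> \<longleftrightarrow>
     bdd_above ((\<lambda>p. \<bar>\<mu> (fst p \<otimes>\<^bsub>G\<^esub> snd p) - \<mu> (fst p) - \<mu> (snd p)\<bar>) ` (N \<times> N)) \<and>
     (\<forall>x\<in>N. \<forall>n::int. \<mu> (x [^]\<^bsub>G\<^esub> n) = of_int n * \<mu> x)"

definition G_invariant :: "('a, 'b) monoid_scheme \<Rightarrow> 'a set \<Rightarrow> ('a \<Rightarrow> real) \<Rightarrow> bool" where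
  "G_invariant G N \<mu> \<longleftrightarrow>
     (\<forall>g\<in>carrier G. \<forall>x\<in>N. \<mu> (g \<otimes>\<^bsub>G\<^esub> x \<otimes>\<^bsub>G\<^esub> inv\<^bsub>G\<^esub> g) = \<mu> x)"

definition commutator :: "('a, 'b) monoid_scheme \<Rightarrow> 'a \<Rightarrow> 'a \<Rightarrow> 'a" where
  "commutator G g x = g \<otimes>\<^bsub>G\<^esub> x \<otimes>\<^bsub>G\<^esub> inv\<^bsub>G\<^esub> g \<otimes>\<^bsub>G\<^esub> inv\<^bsub>G\<^esub> x"

end

theory Submission
  imports Defs
begin

lemma (in group) cancel_a: "a \<in> carrier G \<Longrightarrow> z \<in> carrier G \<Longrightarrow> a \<otimes> (inv a \<otimes> z) = z"
  by (simp add: m_assoc[symmetric])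

lemma (in group) cancel_b: "a \<in> carrier G \<Longrightarrow> z \<in> carrier G \<Longrightarrow> inv a \<otimes> (a \<otimes> z) = z"
  by (simp add: m_assoc[symmetric])

lemma (in group) key_ident:
  assumes [simp]: "x \<in> carrier G" "y \<in> carrier G" "a \<in> carrier G" "b \<in> carrier G" "d \<in> carrier G"
  shows "inv ((x \<otimes> y) \<otimes> (a \<otimes> (x \<otimes> y))) \<otimes> (x \<otimes> (x \<otimes> b) \<otimes> (d \<otimes> (y \<otimes> y)))
    = inv y \<otimes> commutator G (y \<otimes> inv (a \<otimes> (x \<otimes> y))) (inv y \<otimes> (x \<otimes> y) \<otimes> inv y) \<otimes> y
      \<otimes> (inv (y \<otimes> y) \<otimes> (inv a \<otimes> (b \<otimes> d)) \<otimes> (y \<otimes> y))"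
  unfolding commutator_def
  by (simp add: m_assoc inv_mult_group cancel_a cancel_b)

lemma (in subgroup) pow_closed_sub:
  assumes "group G" "x \<in> H" shows "x [^]\<^bsub>G\<^esub> (n::nat) \<in> H"
proof (induction n)
  case 0 thus ?case by (simp add: one_closed)
next
  case (Suc n) thus ?case using assms by (simp add: m_closed)
qed

lemma (in group) prop_main:
  fixes N :: "'a set" and \<mu> :: "'a \<Rightarrow> real"
  assumes "N \<lhd> G"
    and "homogeneous_quasimorphism G N \<mu>"
    and "G_invariant G N \<mu>"
  shows "defect G N \<mu> = (SUP p\<in>carrier G \<times> N. \<bar>\<mu> (commutator G (fst p) (snd p))\<bar>)"
proof -
  have sub: "subgroup N G" by (rule normal_imp_subgroup[OF assms(1)])
  have NG: "\<And>z. z \<in> N \<Longrightarrow> z \<in> carrier G" by (rule subgroup.mem_carrier[OF sub])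
  have Nm: "\<And>a b. a \<in> N \<Longrightarrow> b \<in> N \<Longrightarrow> a \<otimes> b \<in> N" by (rule subgroup.m_closed[OF sub])
  have Ni: "\<And>a. a \<in> N \<Longrightarrow> inv a \<in> N" by (rule subgroup.m_inv_closed[OF sub])
  have N1: "\<one> \<in> N" by (rule subgroup.one_closed[OF sub])
  have Np: "\<And>a n. a \<in> N \<Longrightarrow> a [^] (n::nat) \<in> N" by (rule subgroup.pow_closed_sub[OF sub is_group])
  have Nc: "\<And>g z. g \<in> carrier G \<Longrightarrow> z \<in> N \<Longrightarrow> g \<otimes> z \<otimes> inv g \<in> N"
    by (rule normal.inv_op_closed2[OF assms(1)])
  have inv_: "\<And>g z. g \<in> carrier G \<Longrightarrow> z \<in> N \<Longrightarrow> \<mu> (g \<otimes> z \<otimes> inv g) = \<mu> z"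
    using assms(3) unfolding G_invariant_def by simp
  have hom: "\<And>x n. x \<in> N \<Longrightarrow> \<mu> (x [^] (n::int)) = of_int n * \<mu> x"
    using assms(2) unfolding homogeneous_quasimorphism_def by simp
  define E where "E = (\<lambda>p. \<bar>\<mu> (fst p \<otimes> snd p) - \<mu> (fst p) - \<mu> (snd p)\<bar>)"
  define K where "K = (\<lambda>p. \<bar>\<mu> (commutator G (fst p) (snd p))\<bar>)"
  define D where "D = (SUP p\<in>N \<times> N. E p)"
  define C where "C = (SUP p\<in>carrier G \<times> N. K p)"
  have bddE: "bdd_above (E ` (N \<times> N))"
    unfolding E_def by (rule conjunct1[OF assms(2)[unfolded homogeneous_quasimorphism_def]])
  have neN: "N \<times> N \<noteq> {}" using N1 by blast
  have neK: "carrier G \<times> N \<noteq> {}" using N1 by blast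
  have Ele: "\<And>a b. a \<in> N \<Longrightarrow> b \<in> N \<Longrightarrow> \<bar>\<mu> (a \<otimes> b) - \<mu> a - \<mu> b\<bar> \<le> D"
  proof -
    fix a b assume "a \<in> N" "b \<in> N"
    hence "E (a, b) \<le> D" unfolding D_def by (intro cSUP_upper bddE) auto
    thus "\<bar>\<mu> (a \<otimes> b) - \<mu> a - \<mu> b\<bar> \<le> D" by (simp add: E_def)
  qed
  have D0: "0 \<le> D" using Ele[OF N1 N1] by linarith
  have muinv: "\<And>z. z \<in> N \<Longrightarrow> \<mu> (inv z) = - \<mu> z"
  proof -
    fix z assume z: "z \<in> N"
    have "\<mu> (z [^] (-1::int)) = - \<mu> z" using hom[OF z, of "-1"] by simp
    moreover have "z [^] (-1::int) = inv z" using int_pow_neg[of z 1] NG[OF z] by simp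
    ultimately show "\<mu> (inv z) = - \<mu> z" by simp
  qed
  have mupow: "\<And>z n. z \<in> N \<Longrightarrow> \<mu> (z [^] (n::nat)) = real n * \<mu> z"
  proof -
    fix z and n :: nat assume z: "z \<in> N"
    have "\<mu> (z [^] (int n)) = of_int (int n) * \<mu> z" using hom[OF z] by blast
    thus "\<mu> (z [^] n) = real n * \<mu> z" by (simp add: int_pow_int)
  qed
  have mu1: "\<mu> \<one> = 0" using mupow[OF N1, of 0] by simp
  have KD: "\<And>g z. g \<in> carrier G \<Longrightarrow> z \<in> N \<Longrightarrow> \<bar>\<mu> (commutator G g z)\<bar> \<le> D"
  proof -
    fix g z assume g: "g \<in> carrier G" and z: "z \<in> N"
    have "commutator G g z = (g \<otimes> z \<otimes> inv g) \<otimes> inv z" by (simp add: commutator_def)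
    moreover have "\<bar>\<mu> ((g \<otimes> z \<otimes> inv g) \<otimes> inv z) - \<mu> (g \<otimes> z \<otimes> inv g) - \<mu> (inv z)\<bar> \<le> D"
      using Ele Nc[OF g z] Ni[OF z] by blast
    ultimately show "\<bar>\<mu> (commutator G g z)\<bar> \<le> D" using inv_[OF g z] muinv[OF z] by simp
  qed
  have Ncomm: "\<And>g z. g \<in> carrier G \<Longrightarrow> z \<in> N \<Longrightarrow> commutator G g z \<in> N"
    unfolding commutator_def using Nc Nm Ni by blast
  have bddK: "bdd_above (K ` (carrier G \<times> N))"
    unfolding K_def by (rule bdd_aboveI[of _ D]) (use KD in auto)
  have Kle: "\<And>g z. g \<in> carrier G \<Longrightarrow> z \<in> N \<Longrightarrow> \<bar>\<mu> (commutator G g z)\<bar> \<le> C"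
  proof -
    fix g z assume "g \<in> carrier G" "z \<in> N"
    hence "K (g, z) \<le> C" unfolding C_def by (intro cSUP_upper bddK) auto
    thus "\<bar>\<mu> (commutator G g z)\<bar> \<le> C" by (simp add: K_def)
  qed
  have CD: "C \<le> D" unfolding C_def K_def by (rule cSUP_least[OF neK]) (use KD in auto)
  have main: "\<And>x y. x \<in> N \<Longrightarrow> y \<in> N \<Longrightarrow> \<bar>\<mu> (x \<otimes> y) - \<mu> x - \<mu> y\<bar> \<le> (C + D) / 2"
  proof -
    fix x y assume x: "x \<in> N" and y: "y \<in> N"
    have xG [simp]: "x \<in> carrier G" and yG [simp]: "y \<in> carrier G" using x y NG by auto
    define p where "p = x \<otimes> y"
    have pN: "p \<in> N" using Nm[OF x y] p_def by simp
    have pG [simp]: "p \<in> carrier G" using NG[OF pN] .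
    define Q where "Q = (\<lambda>n::nat. inv (p [^] n) \<otimes> (x [^] n \<otimes> y [^] n))"
    have QN: "\<And>n. Q n \<in> N" unfolding Q_def by (rule Nm[OF Ni[OF Np[OF pN]] Nm[OF Np[OF x] Np[OF y]]])
    have Qstep: "\<And>n. \<bar>\<mu> (Q (Suc (Suc n)))\<bar> \<le> \<bar>\<mu> (Q n)\<bar> + C + D"
    proof -
      fix n :: nat
      define c where "c = commutator G (y \<otimes> inv (p [^] n \<otimes> p)) (inv y \<otimes> p \<otimes> inv y)"
      have g1: "y \<otimes> inv (p [^] n \<otimes> p) \<in> carrier G" using pG yG by (intro m_closed inv_closed nat_pow_closed)
      have z1: "inv y \<otimes> p \<otimes> inv y \<in> N" by (rule Nm[OF Nm[OF Ni[OF y] pN] Ni[OF y]])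
      have cN: "c \<in> N" unfolding c_def using Ncomm[OF g1 z1] .
      have cC: "\<bar>\<mu> c\<bar> \<le> C" unfolding c_def using Kle[OF g1 z1] .
      have e1: "p [^] Suc (Suc n) = p \<otimes> (p [^] n \<otimes> p)" using nat_pow_Suc2[OF pG, of "Suc n"] by simp
      have e2: "x [^] Suc (Suc n) = x \<otimes> (x \<otimes> x [^] n)"
      proof -
        have a: "x [^] Suc (Suc n) = x \<otimes> x [^] Suc n" by (rule nat_pow_Suc2[OF xG])
        have b: "x [^] Suc n = x \<otimes> x [^] n" by (rule nat_pow_Suc2[OF xG])
        show ?thesis by (simp only: a b)
      qed
      have e3: "y [^] Suc (Suc n) = y [^] n \<otimes> (y \<otimes> y)" by (simp add: m_assoc)
      have QS: "Q (Suc (Suc n)) = (inv y \<otimes> c \<otimes> inv (inv y)) \<otimes> (inv (y \<otimes> y) \<otimes> Q n \<otimes> inv (inv (y \<otimes> y)))"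
      proof -
        have "Q (Suc (Suc n)) = inv (p \<otimes> (p [^] n \<otimes> p)) \<otimes> (x \<otimes> (x \<otimes> x [^] n) \<otimes> (y [^] n \<otimes> (y \<otimes> y)))"
          by (simp only: Q_def e1 e2 e3)
        also have "\<dots> = inv y \<otimes> c \<otimes> y \<otimes> (inv (y \<otimes> y) \<otimes> Q n \<otimes> (y \<otimes> y))"
          unfolding c_def Q_def p_def by (rule key_ident) simp_all
        also have "\<dots> = (inv y \<otimes> c \<otimes> inv (inv y)) \<otimes> (inv (y \<otimes> y) \<otimes> Q n \<otimes> inv (inv (y \<otimes> y)))"
          by simp
        finally show ?thesis .
      qed
      have A: "\<mu> (inv y \<otimes> c \<otimes> inv (inv y)) = \<mu> c" by (rule inv_[OF inv_closed[OF yG] cN])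
      have B: "\<mu> (inv (y \<otimes> y) \<otimes> Q n \<otimes> inv (inv (y \<otimes> y))) = \<mu> (Q n)" by (rule inv_[OF inv_closed[OF m_closed[OF yG yG]] QN])
      have AN: "inv y \<otimes> c \<otimes> inv (inv y) \<in> N" by (rule Nc[OF inv_closed[OF yG] cN])
      have BN: "inv (y \<otimes> y) \<otimes> Q n \<otimes> inv (inv (y \<otimes> y)) \<in> N" by (rule Nc[OF inv_closed[OF m_closed[OF yG yG]] QN])
      have "\<bar>\<mu> (Q (Suc (Suc n))) - \<mu> c - \<mu> (Q n)\<bar> \<le> D"
        using Ele[OF AN BN] A B QS by simp
      thus "\<bar>\<mu> (Q (Suc (Suc n)))\<bar> \<le> \<bar>\<mu> (Q n)\<bar> + C + D" using cC by linarith
    qed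
    have Qbound: "\<And>m. \<bar>\<mu> (Q (2 * m))\<bar> \<le> real m * (C + D)"
    proof -
      fix m show "\<bar>\<mu> (Q (2 * m))\<bar> \<le> real m * (C + D)"
      proof (induction m)
        case 0 thus ?case by (simp add: Q_def mu1)
      next
        case (Suc m)
        have "2 * Suc m = Suc (Suc (2 * m))" by simp
        thus ?case using Qstep[of "2*m"] Suc.IH by (simp add: algebra_simps)
      qed
    qed
    have bnd: "\<And>m. 2 * real m * \<bar>\<mu> (x \<otimes> y) - \<mu> x - \<mu> y\<bar> \<le> 2 * D + real m * (C + D)"
    proof -
      fix m
      define n :: nat where "n = 2 * m"
      have f1: "x [^] n \<otimes> y [^] n = p [^] n \<otimes> Q n"
        unfolding Q_def by (simp add: m_assoc[symmetric])
      have h1: "\<bar>\<mu> (x [^] n \<otimes> y [^] n) - \<mu> (x [^] n) - \<mu> (y [^] n)\<bar> \<le> D"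
        using Ele Np x y by blast
      have h2: "\<bar>\<mu> (p [^] n \<otimes> Q n) - \<mu> (p [^] n) - \<mu> (Q n)\<bar> \<le> D"
        using Ele Np pN QN by blast
      have h3: "\<bar>\<mu> (Q n)\<bar> \<le> real m * (C + D)" using Qbound n_def by simp
      have "real n * \<bar>\<mu> p - \<mu> x - \<mu> y\<bar> = \<bar>\<mu> (p [^] n) - \<mu> (x [^] n) - \<mu> (y [^] n)\<bar>"
      proof -
        have eqn: "\<mu> (p [^] n) - \<mu> (x [^] n) - \<mu> (y [^] n) = real n * (\<mu> p - \<mu> x - \<mu> y)"
          by (simp add: mupow[OF pN] mupow[OF x] mupow[OF y] algebra_simps)
        show ?thesis by (simp only: eqn abs_mult abs_of_nat)
      qed
      also have "\<dots> \<le> 2 * D + real m * (C + D)" using h1[unfolded f1] h2 h3 by (smt (verit))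
      finally show "2 * real m * \<bar>\<mu> (x \<otimes> y) - \<mu> x - \<mu> y\<bar> \<le> 2 * D + real m * (C + D)"
        by (simp add: n_def p_def)
    qed
    show "\<bar>\<mu> (x \<otimes> y) - \<mu> x - \<mu> y\<bar> \<le> (C + D) / 2"
    proof (rule ccontr)
      let ?e = "\<bar>\<mu> (x \<otimes> y) - \<mu> x - \<mu> y\<bar>"
      assume "\<not> ?e \<le> (C + D) / 2"
      hence dpos: "0 < ?e - (C + D) / 2" by simp
      obtain m where m: "D < real m * (?e - (C + D) / 2)"
        using reals_Archimedean3[OF dpos] by blast
      have aux: "u \<le> D" if "2 * u = v - w" "v \<le> 2 * D + w" for u v w :: real using that by linarith
      have "2 * real m * ?e \<le> 2 * D + real m * (C + D)" by (rule bnd)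
      moreover have "2 * (real m * (?e - (C + D) / 2)) = 2 * real m * ?e - real m * (C + D)"
        by (simp add: algebra_simps)
      ultimately have "real m * (?e - (C + D) / 2) \<le> D" by (rule aux[rotated])
      thus False using m by simp
    qed
  qed
  have "(SUP p\<in>N \<times> N. E p) \<le> (C + D) / 2"
    by (rule cSUP_least[OF neN]) (use main in \<open>auto simp: E_def\<close>)
  hence "D \<le> (C + D) / 2" by (simp only: D_def)
  hence DC: "D = C" using CD by simp
  have l: "defect G N \<mu> = D" unfolding defect_def D_def E_def by simp
  have r: "(SUP p\<in>carrier G \<times> N. \<bar>\<mu> (commutator G (fst p) (snd p))\<bar>) = C"
    unfolding C_def K_def by simp
  show ?thesis using l r DC by simp
qed

theorem proposition4p4:
  fixes G :: "('a, 'b) monoid_scheme" and N :: "'a set" and \<mu> :: "'a \<Rightarrow> real"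
  assumes "group G"
    and "N \<lhd> G"
    and "homogeneous_quasimorphism G N \<mu>"
    and "G_invariant G N \<mu>"
  shows "defect G N \<mu> = (SUP p\<in>carrier G \<times> N. \<bar>\<mu> (commutator G (fst p) (snd p))\<bar>)"
  by (rule group.prop_main[OF assms])

end
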